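(* Let $p_1,p_2\in(0,1)$ and $U_1^+,U_1^-,U_2^+,U_2^->0$. Consider the linear program (AUX) in the variables $c=(c_1^+,c_1^-,c_2^+,c_2^-)\in\mathbb{R}^4$: maximize $W'(c)=p_1U_1^+c_1^+-(1-p_1)U_1^-c_1^-+p_2U_2^+c_2^+-(1-p_2)U_2^-c_2^-$ subject to $p_1c_2^+-(1-p_1)c_2^-\le p_1^2$; $p_2c_1^+-(1-p_2)c_1^-\le p_2^2$; $p_1c_1^++(1-p_1)c_1^-=p_2c_2^++(1-p_2)c_2^-$; and $0\le c_1^+,c_1^-,c_2^+,c_2^-\le 1$. Then at least one of $c^{(1)}=(c_1^+=1,\ c_1^-=p_2,\ c_2^+=1,\ c_2^-=p_1)$ and $c^{(2)}=(c_1^+=p_2,\ c_1^-=0,\ c_2^+=p_1,\ c_2^-=0)$ is an optimal solution of (AUX). *)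

theory Defs
  imports Complex_Main
begin

definition aux_obj :: "real \<Rightarrow> real \<Rightarrow> real \<Rightarrow> real \<Rightarrow> real \<Rightarrow> real \<Rightarrow>
    real \<times> real \<times> real \<times> real \<Rightarrow> real" where
  "aux_obj p1 p2 U1p U1m U2p U2m c = (case c of (c1p, c1m, c2p, c2m) \<Rightarrow>
     p1 * U1p * c1p - (1 - p1) * U1m * c1m + p2 * U2p * c2p - (1 - p2) * U2m * c2m)"

definition aux_feasible :: "real \<Rightarrow> real \<Rightarrow> real \<times> real \<times> real \<times> real \<Rightarrow> bool" where
  "aux_feasible p1 p2 c = (case c of (c1p, c1m, c2p, c2m) \<Rightarrow>
     p1 * c2p - (1 - p1) * c2m \<le> p1^2 \<and>
     p2 * c1p - (1 - p2) * c1m \<le> p2^2 \<and>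
     p1 * c1p + (1 - p1) * c1m = p2 * c2p + (1 - p2) * c2m \<and>
     0 \<le> c1p \<and> c1p \<le> 1 \<and> 0 \<le> c1m \<and> c1m \<le> 1 \<and>
     0 \<le> c2p \<and> c2p \<le> 1 \<and> 0 \<le> c2m \<and> c2m \<le> 1)"

definition aux_optimal :: "real \<Rightarrow> real \<Rightarrow> real \<Rightarrow> real \<Rightarrow> real \<Rightarrow> real \<Rightarrow>
    real \<times> real \<times> real \<times> real \<Rightarrow> bool" where
  "aux_optimal p1 p2 U1p U1m U2p U2m c \<longleftrightarrow>
     aux_feasible p1 p2 c \<and>
     (\<forall>d. aux_feasible p1 p2 d \<longrightarrow> aux_obj p1 p2 U1p U1m U2p U2m d \<le> aux_obj p1 p2 U1p U1m U2p U2m c)"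

end

theory Submission
  imports Defs
begin

lemma key:
  fixes p1 p2 U1p U1m U2p U2m a b x y :: real
  assumes p: "0 < p1" "p1 < 1" "0 < p2" "p2 < 1"
    and U: "U1p > 0" "U1m > 0" "U2p > 0" "U2m > 0"
    and c1: "p1 * x - (1 - p1) * y \<le> p1^2"
    and c2: "p2 * a - (1 - p2) * b \<le> p2^2"
    and eq: "p1 * a + (1 - p1) * b = p2 * x + (1 - p2) * y"
    and box: "0 \<le> a" "a \<le> 1" "0 \<le> b" "b \<le> 1" "0 \<le> x" "x \<le> 1" "0 \<le> y" "y \<le> 1"
  shows "p1 * U1p * a - (1 - p1) * U1m * b + p2 * U2p * x - (1 - p2) * U2m * y
    \<le> max (p1 * U1p * 1 - (1 - p1) * U1m * p2 + p2 * U2p * 1 - (1 - p2) * U2m * p1)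
            (p1 * U1p * p2 - (1 - p1) * U1m * 0 + p2 * U2p * p1 - (1 - p2) * U2m * 0)"
    (is "?obj \<le> max ?W1 ?W2")
proof -
  define s where "s = p1 * a + (1 - p1) * b"
  have s2: "s = p2 * x + (1 - p2) * y" using eq s_def by simp
  define f1 where "f1 = p1 * U1p * a - (1 - p1) * U1m * b"
  define f2 where "f2 = p2 * U2p * x - (1 - p2) * U2m * y"
  have obj: "?obj = f1 + f2" unfolding f1_def f2_def by simp
  have f1e: "f1 = p1 * (U1p + U1m) * a - U1m * s"
    unfolding f1_def s_def by (simp add: algebra_simps)
  have f2e: "f2 = p2 * (U2p + U2m) * x - U2m * s"
    unfolding f2_def s2 by (simp add: algebra_simps)
  have i1: "p1 * a \<le> s" unfolding s_def using p box by (simp add: mult_nonneg_nonneg)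
  have i2: "p2 * x \<le> s" unfolding s2 using p box by (simp add: mult_nonneg_nonneg)
  define D where "D = p1 + p2 - 2 * p1 * p2"
  have Dpos: "D > 0"
  proof -
    have "D = p1 * (1 - p2) + p2 * (1 - p1)" unfolding D_def by (simp add: algebra_simps)
    moreover have "p1 * (1 - p2) > 0" "p2 * (1 - p1) > 0" using p by simp_all
    ultimately show ?thesis by linarith
  qed
  have iii1: "D * a \<le> p2^2 * (1 - p1) + (1 - p2) * s"
  proof -
    have "(1 - p1) * (p2 * a - (1 - p2) * b) \<le> (1 - p1) * p2^2"
      using c2 p by (intro mult_left_mono) auto
    thus ?thesis unfolding D_def s_def by (simp add: algebra_simps)
  qed
  have iii2: "D * x \<le> p1^2 * (1 - p2) + (1 - p1) * s"
  proof -
    have "(1 - p2) * (p1 * x - (1 - p1) * y) \<le> (1 - p2) * p1^2"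
      using c1 p by (intro mult_left_mono) auto
    thus ?thesis unfolding D_def s2 by (simp add: algebra_simps)
  qed
  define S where "S = p1 + p2 - p1 * p2"
  have A1: "p1 * (U1p + U1m) > 0" "p2 * (U2p + U2m) > 0" using p U by simp_all
  consider "s \<le> p1 * p2" | "S \<le> s" | "p1 * p2 \<le> s" "s \<le> S" by linarith
  then show ?thesis
  proof cases
    case 1
    have "f1 \<le> (U1p + U1m) * s - U1m * s"
    proof -
      have "p1 * (U1p + U1m) * a = (U1p + U1m) * (p1 * a)" by simp
      also have "\<dots> \<le> (U1p + U1m) * s" using i1 U by (intro mult_left_mono) auto
      finally show ?thesis using f1e by simp
    qed
    moreover have "f2 \<le> (U2p + U2m) * s - U2m * s"
    proof -
      have "p2 * (U2p + U2m) * x = (U2p + U2m) * (p2 * x)" by simp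
      also have "\<dots> \<le> (U2p + U2m) * s" using i2 U by (intro mult_left_mono) auto
      finally show ?thesis using f2e by simp
    qed
    moreover have "(U1p + U2p) * s \<le> (U1p + U2p) * (p1 * p2)" using 1 U by (intro mult_left_mono) auto
    ultimately have "f1 + f2 \<le> ?W2" by (simp add: algebra_simps)
    thus ?thesis using obj by simp
  next
    case 2
    have "f1 \<le> p1 * (U1p + U1m) - U1m * s"
      using f1e mult_left_mono[OF box(2) less_imp_le[OF A1(1)]] by simp
    moreover have "f2 \<le> p2 * (U2p + U2m) - U2m * s"
      using f2e mult_left_mono[OF box(6) less_imp_le[OF A1(2)]] by simp
    moreover have "(U1m + U2m) * S \<le> (U1m + U2m) * s" using 2 U by (intro mult_left_mono) auto
    ultimately have "f1 + f2 \<le> p1 * (U1p + U1m) + p2 * (U2p + U2m) - (U1m + U2m) * S"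
      by (simp add: algebra_simps)
    also have "\<dots> = ?W1" unfolding S_def by (simp add: algebra_simps)
    finally show ?thesis using obj by simp
  next
    case 3
    define A where "A = p1 * (U1p + U1m)"
    define B where "B = p2 * (U2p + U2m)"
    define M where "M = (\<lambda>t. A * (p2^2 * (1 - p1) + (1 - p2) * t) + B * (p1^2 * (1 - p2) + (1 - p1) * t)
        - D * (U1m + U2m) * t)"
    define \<beta> where "\<beta> = A * (1 - p2) + B * (1 - p1) - D * (U1m + U2m)"
    have Mlin: "M t = M (p1 * p2) + (t - p1 * p2) * \<beta>" for t
      unfolding M_def \<beta>_def by (simp add: algebra_simps)
    have "D * f1 \<le> A * (p2^2 * (1 - p1) + (1 - p2) * s) - D * U1m * s"
    proof -
      have "A * (D * a) \<le> A * (p2^2 * (1 - p1) + (1 - p2) * s)"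
        using iii1 A1 unfolding A_def by (intro mult_left_mono) auto
      moreover have "D * f1 = A * (D * a) - D * U1m * s" unfolding f1e A_def by (simp add: algebra_simps)
      ultimately show ?thesis by linarith
    qed
    moreover have "D * f2 \<le> B * (p1^2 * (1 - p2) + (1 - p1) * s) - D * U2m * s"
    proof -
      have "B * (D * x) \<le> B * (p1^2 * (1 - p2) + (1 - p1) * s)"
        using iii2 A1 unfolding B_def by (intro mult_left_mono) auto
      moreover have "D * f2 = B * (D * x) - D * U2m * s" unfolding f2e B_def by (simp add: algebra_simps)
      ultimately show ?thesis by linarith
    qed
    ultimately have Df: "D * (f1 + f2) \<le> M s" unfolding M_def by (simp add: algebra_simps)
    have MW2: "M (p1 * p2) = D * ?W2"
      unfolding M_def A_def B_def D_def by (simp add: algebra_simps power2_eq_square)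
    have MW1: "M S = D * ?W1"
      unfolding M_def A_def B_def D_def S_def by (simp add: algebra_simps power2_eq_square)
    have SD: "S - p1 * p2 = D" unfolding S_def D_def by simp
    have "M s \<le> D * max ?W1 ?W2"
    proof (cases "\<beta> \<ge> 0")
      case True
      have "(s - p1 * p2) * \<beta> \<le> (S - p1 * p2) * \<beta>" using 3 True by (intro mult_right_mono) auto
      hence "M s \<le> M S" using Mlin[of s] Mlin[of S] by linarith
      also have "\<dots> \<le> D * max ?W1 ?W2" using MW1 Dpos by (simp add: mult_left_mono)
      finally show ?thesis .
    next
      case False
      have "(s - p1 * p2) * \<beta> \<le> 0" using 3 False by (simp add: mult_nonneg_nonpos)
      hence "M s \<le> M (p1 * p2)" using Mlin[of s] by linarith
      also have "\<dots> \<le> D * max ?W1 ?W2" using MW2 Dpos by (simp add: mult_left_mono)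
      finally show ?thesis .
    qed
    with Df have "D * (f1 + f2) \<le> D * max ?W1 ?W2" by linarith
    hence "f1 + f2 \<le> max ?W1 ?W2" using Dpos by simp
    thus ?thesis using obj by simp
  qed
qed

theorem lemma3:
  fixes p1 p2 U1p U1m U2p U2m :: real
  assumes "0 < p1" "p1 < 1" "0 < p2" "p2 < 1"
    and "U1p > 0" "U1m > 0" "U2p > 0" "U2m > 0"
  shows "aux_optimal p1 p2 U1p U1m U2p U2m (1, p2, 1, p1) \<or>
         aux_optimal p1 p2 U1p U1m U2p U2m (p2, 0, p1, 0)"
proof -
  have F1: "aux_feasible p1 p2 (1, p2, 1, p1)"
    using assms unfolding aux_feasible_def by (simp add: algebra_simps power2_eq_square)
  have F2: "aux_feasible p1 p2 (p2, 0, p1, 0)"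
    using assms unfolding aux_feasible_def by (simp add: algebra_simps power2_eq_square)
  have B: "aux_obj p1 p2 U1p U1m U2p U2m d \<le>
      max (aux_obj p1 p2 U1p U1m U2p U2m (1, p2, 1, p1)) (aux_obj p1 p2 U1p U1m U2p U2m (p2, 0, p1, 0))"
    if "aux_feasible p1 p2 d" for d
  proof -
    obtain a b x y where d: "d = (a, b, x, y)" by (cases d) auto
    show ?thesis using that unfolding d aux_feasible_def aux_obj_def
      using key[OF assms, of x y a b] by simp
  qed
  show ?thesis
  proof (cases "aux_obj p1 p2 U1p U1m U2p U2m (p2, 0, p1, 0) \<le> aux_obj p1 p2 U1p U1m U2p U2m (1, p2, 1, p1)")
    case True
    then have "aux_optimal p1 p2 U1p U1m U2p U2m (1, p2, 1, p1)"
      unfolding aux_optimal_def using F1 B by (metis max.absorb1)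
    thus ?thesis ..
  next
    case False
    then have "aux_optimal p1 p2 U1p U1m U2p U2m (p2, 0, p1, 0)"
      unfolding aux_optimal_def using F2 B by (metis max.absorb2 nle_le)
    thus ?thesis ..
  qed
qed

end
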